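(* For every $n\ge1$ there is a bijection $S\mapsto M$ from the set of signatures in $[2n]$ onto the set of Motzkin paths of length $n$ such that the weight of $S$, namely $\big(\prod_{i=1}^{2n}s(i)\big)t^{|S|/2}$, equals the weight $\rho(M)$ of $M$, where $\rho(M)$ is the product of its step weights: an up step at height $h\ge0$ has weight $(h+1)(h+2)t$, a level step at height $h\ge0$ has weight $(h+1)^2$, and a down step at height $h\ge1$ has weight $(h+1)h$.
   Context: A signature in $[2n]$ is a set $S\subseteq[2n]$ such that: (i) $S$ has $k$ odd and $k$ even elements for some $k\ge0$; (ii) for each $j\in[n]$ at most one of $2j-1,2j$ lies in $S$; (iii) for every $i\in[2n]$, $S\cap\{1,\dots,i\}$ has at least as many odd as even elements. With $f(i)$ (resp. $g(i)$) the number of odd (resp. even) elements of $S$ less than $i$, its vector is $s(i)=f(i)-g(i)$ if $i\in S$ is even, and $s(i)=f(i)-g(i)+1$ otherwise. A Motzkin path of length $n$ is a lattice path from $(0,0)$ to $(n,0)$ staying weakly above the $x$-axis with steps up $(1,1)$, down $(1,-1)$ and level $(1,0)$; the height of a step is the $y$-coordinate of its starting point. *)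

theory Defs
  imports "HOL-Computational_Algebra.Polynomial"
begin

definition odd_below :: "nat set \<Rightarrow> nat \<Rightarrow> int" where
  "odd_below S i = int (card {x \<in> S. odd x \<and> x < i})"

definition even_below :: "nat set \<Rightarrow> nat \<Rightarrow> int" where
  "even_below S i = int (card {x \<in> S. even x \<and> x < i})"

definition is_signature :: "nat \<Rightarrow> nat set \<Rightarrow> bool" where
  "is_signature n S \<longleftrightarrow>
     S \<subseteq> {1..2*n} \<and>
     card {x \<in> S. odd x} = card {x \<in> S. even x} \<and>
     (\<forall>j \<in> {1..n}. \<not> (2*j - 1 \<in> S \<and> 2*j \<in> S)) \<and>
     (\<forall>i \<in> {1..2*n}. card {x \<in> S. even x \<and> x \<le> i} \<le> card {x \<in> S. odd x \<and> x \<le> i})"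

definition sig_vec :: "nat set \<Rightarrow> nat \<Rightarrow> int" where
  "sig_vec S i = (if i \<in> S \<and> even i then odd_below S i - even_below S i
                  else odd_below S i - even_below S i + 1)"

definition tvar :: "int poly" where "tvar = [:0, 1:]"

definition sig_weight :: "nat \<Rightarrow> nat set \<Rightarrow> int poly" where
  "sig_weight n S = smult (\<Prod>i\<in>{1..2*n}. sig_vec S i) (tvar ^ (card S div 2))"

datatype step = Up | Lvl | Dn

fun step_delta :: "step \<Rightarrow> int" where
  "step_delta Up = 1" | "step_delta Lvl = 0" | "step_delta Dn = -1"

text \<open>Height after the first k steps = height at the start of step k (0-indexed).\<close>
definition height :: "step list \<Rightarrow> nat \<Rightarrow> int" where
  "height M k = sum_list (map step_delta (take k M))"

definition is_motzkin :: "nat \<Rightarrow> step list \<Rightarrow> bool" where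
  "is_motzkin n M \<longleftrightarrow> length M = n \<and> (\<forall>k \<le> n. height M k \<ge> 0) \<and> height M n = 0"

fun step_weight :: "int \<Rightarrow> step \<Rightarrow> int poly" where
  "step_weight h Up = smult ((h+1)*(h+2)) tvar"
| "step_weight h Lvl = [:(h+1)^2:]"
| "step_weight h Dn = [:(h+1)*h:]"

definition rho :: "step list \<Rightarrow> int poly" where
  "rho M = (\<Prod>k<length M. step_weight (height M k) (M ! k))"

end

theory Submission
  imports Defs
begin

definition cnt :: "step \<Rightarrow> step list \<Rightarrow> nat \<Rightarrow> nat" where
  "cnt a M k = card {j. j < length M \<and> M!j = a \<and> j < k}"

lemma cnt_fin: "finite {j. j < length M \<and> M!j = a \<and> j < k}"
  by (rule finite_subset[of _ "{..<k}"]) auto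

lemma cnt_0[simp]: "cnt a M 0 = 0" by (simp add: cnt_def)

lemma cnt_Suc: "cnt a M (Suc k) = cnt a M k + (if k < length M \<and> M!k = a then 1 else 0)"
proof (cases "k < length M \<and> M!k = a")
  case True
  then have "{j. j < length M \<and> M!j = a \<and> j < Suc k} = insert k {j. j < length M \<and> M!j = a \<and> j < k}"
    by auto
  then show ?thesis using True cnt_fin[of M a k] by (simp add: cnt_def)
next
  case False
  then have "{j. j < length M \<and> M!j = a \<and> j < Suc k} = {j. j < length M \<and> M!j = a \<and> j < k}"
    using less_Suc_eq by auto
  then show ?thesis using False by (simp add: cnt_def)
qed

lemma cnt_mono: "k \<le> k' \<Longrightarrow> cnt a M k \<le> cnt a M k'"
  unfolding cnt_def by (rule card_mono[OF cnt_fin]) auto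

lemma height_cnt: "height M k = int (cnt Up M k) - int (cnt Dn M k)"
proof (induction k)
  case 0 show ?case by (simp add: height_def)
next
  case (Suc k)
  show ?case
  proof (cases "k < length M")
    case True
    have "height M (Suc k) = height M k + step_delta (M!k)"
      using True by (simp add: height_def take_Suc_conv_app_nth)
    then show ?thesis using Suc.IH by (cases "M!k") (simp_all add: cnt_Suc True)
  next
    case False
    have "height M (Suc k) = height M k" using False by (simp add: height_def)
    then show ?thesis using Suc.IH False by (simp add: cnt_Suc)
  qed
qed

definition psi :: "step list \<Rightarrow> nat set" where
  "psi M = {2*j+1 | j. j < length M \<and> M!j = Up} \<union> {2*j+2 | j. j < length M \<and> M!j = Dn}"

lemma psi_odd_mem: "(2*j+1 \<in> psi M) \<longleftrightarrow> (j < length M \<and> M!j = Up)"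
  unfolding psi_def by auto presburger

lemma psi_even_mem: "(2*j+2 \<in> psi M) \<longleftrightarrow> (j < length M \<and> M!j = Dn)"
  unfolding psi_def by auto presburger

lemma psi_odd_mem'[simp]: "(Suc (2*j) \<in> psi M) \<longleftrightarrow> (j < length M \<and> M!j = Up)"
  using psi_odd_mem by simp

lemma psi_even_mem'[simp]: "(Suc (Suc (2*j)) \<in> psi M) \<longleftrightarrow> (j < length M \<and> M!j = Dn)"
  using psi_even_mem by simp

lemma psi_sub: "psi M \<subseteq> {1..2*length M}"
  unfolding psi_def by auto

lemma ar1: "(2*j+1 < (i::nat)) = (j < i div 2)" by presburger
lemma ar2: "(2*j+2 < (i::nat)) = (j < (i - 1) div 2)" by presburger

lemma card_odd_lt: "card {x \<in> psi M. odd x \<and> x < i} = cnt Up M (i div 2)"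
proof -
  have "{x \<in> psi M. odd x \<and> x < i} = (\<lambda>j. 2*j+1) ` {j. j < length M \<and> M!j = Up \<and> j < i div 2}"
    unfolding psi_def by (auto simp: ar1)
  then show ?thesis unfolding cnt_def by (simp add: card_image inj_on_def)
qed

lemma card_even_lt: "card {x \<in> psi M. even x \<and> x < i} = cnt Dn M ((i - 1) div 2)"
proof -
  have "{x \<in> psi M. even x \<and> x < i} = (\<lambda>j. 2*j+2) ` {j. j < length M \<and> M!j = Dn \<and> j < (i - 1) div 2}"
    unfolding psi_def by (auto simp: ar2)
  then show ?thesis unfolding cnt_def by (simp add: card_image inj_on_def)
qed

lemma card_odd_all: "card {x \<in> psi M. odd x} = cnt Up M (length M)"
proof -
  have "{x \<in> psi M. odd x} = {x \<in> psi M. odd x \<and> x < 2*length M + 1}"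
    using psi_sub[of M] by fastforce
  then show ?thesis using card_odd_lt[of M "2*length M + 1"] by simp
qed

lemma card_even_all: "card {x \<in> psi M. even x} = cnt Dn M (length M)"
proof -
  have "{x \<in> psi M. even x} = {x \<in> psi M. even x \<and> x < 2*length M + 1}"
    using psi_sub[of M] by fastforce
  then show ?thesis using card_even_lt[of M "2*length M + 1"] by simp
qed

lemma card_odd_le: "card {x \<in> psi M. odd x \<and> x \<le> i} = cnt Up M (Suc i div 2)"
proof -
  have "{x \<in> psi M. odd x \<and> x \<le> i} = {x \<in> psi M. odd x \<and> x < Suc i}" by auto
  then show ?thesis using card_odd_lt[of M "Suc i"] by simp
qed

lemma card_even_le: "card {x \<in> psi M. even x \<and> x \<le> i} = cnt Dn M (i div 2)"
proof -
  have "{x \<in> psi M. even x \<and> x \<le> i} = {x \<in> psi M. even x \<and> x < Suc i}" by auto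
  then show ?thesis using card_even_lt[of M "Suc i"] by simp
qed

lemma sig_iff:
  assumes "length M = n"
  shows "is_signature n (psi M) \<longleftrightarrow> is_motzkin n M"
proof -
  have pair: "\<forall>j \<in> {1..n}. \<not> (2*j - 1 \<in> psi M \<and> 2*j \<in> psi M)"
  proof
    fix j assume "j \<in> {1..n}"
    then have e1: "2*j - 1 = 2*(j-1)+1" and e2: "2*j = 2*(j-1)+2" by auto
    show "\<not> (2*j - 1 \<in> psi M \<and> 2*j \<in> psi M)"
      unfolding e1 e2 psi_odd_mem psi_even_mem by auto
  qed
  have b: "(\<forall>i \<in> {1..2*n}. cnt Dn M (i div 2) \<le> cnt Up M (Suc i div 2)) \<longleftrightarrow>
           (\<forall>k \<le> n. cnt Dn M k \<le> cnt Up M k)"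
  proof
    assume H: "\<forall>i \<in> {1..2*n}. cnt Dn M (i div 2) \<le> cnt Up M (Suc i div 2)"
    show "\<forall>k \<le> n. cnt Dn M k \<le> cnt Up M k"
    proof (intro allI impI)
      fix k assume "k \<le> n"
      show "cnt Dn M k \<le> cnt Up M k"
      proof (cases "k = 0")
        case True then show ?thesis by simp
      next
        case False
        then have "2*k \<in> {1..2*n}" using \<open>k \<le> n\<close> by auto
        with H have "cnt Dn M (2*k div 2) \<le> cnt Up M (Suc (2*k) div 2)" by blast
        moreover have "Suc (2*k) div 2 = k" by presburger
        ultimately show ?thesis by simp
      qed
    qed
  next
    assume H: "\<forall>k \<le> n. cnt Dn M k \<le> cnt Up M k"
    show "\<forall>i \<in> {1..2*n}. cnt Dn M (i div 2) \<le> cnt Up M (Suc i div 2)"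
    proof
      fix i assume "i \<in> {1..2*n}"
      then have "i div 2 \<le> n" by auto
      with H have "cnt Dn M (i div 2) \<le> cnt Up M (i div 2)" by blast
      also have "\<dots> \<le> cnt Up M (Suc i div 2)" by (rule cnt_mono) presburger
      finally show "cnt Dn M (i div 2) \<le> cnt Up M (Suc i div 2)" .
    qed
  qed
  have "is_signature n (psi M) \<longleftrightarrow> cnt Up M n = cnt Dn M n \<and>
        (\<forall>i \<in> {1..2*n}. cnt Dn M (i div 2) \<le> cnt Up M (Suc i div 2))"
    unfolding is_signature_def using psi_sub[of M] pair assms
    by (simp add: card_odd_all card_even_all card_odd_le card_even_le)
  also have "\<dots> \<longleftrightarrow> is_motzkin n M"
    unfolding is_motzkin_def height_cnt b using assms by auto
  finally show ?thesis .
qed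

definition phi :: "nat \<Rightarrow> nat set \<Rightarrow> step list" where
  "phi n S = map (\<lambda>j. if 2*j+1 \<in> S then Up else if 2*j+2 \<in> S then Dn else Lvl) [0..<n]"

lemma phi_psi: "phi (length M) (psi M) = M"
proof (rule nth_equalityI)
  show "length (phi (length M) (psi M)) = length M" by (simp add: phi_def)
  fix i assume "i < length (phi (length M) (psi M))"
  then have i: "i < length M" by (simp add: phi_def)
  show "phi (length M) (psi M) ! i = M ! i"
    using i by (cases "M!i") (simp_all add: phi_def psi_odd_mem psi_even_mem)
qed

lemma psi_phi:
  assumes "is_signature n S"
  shows "psi (phi n S) = S"
proof (rule set_eqI)
  fix x
  have sub: "S \<subseteq> {1..2*n}" and pair: "\<forall>j \<in> {1..n}. \<not> (2*j - 1 \<in> S \<and> 2*j \<in> S)"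
    using assms by (auto simp: is_signature_def)
  have len: "length (phi n S) = n" by (simp add: phi_def)
  show "x \<in> psi (phi n S) \<longleftrightarrow> x \<in> S"
  proof (cases "odd x")
    case True
    have "x = 2*(x div 2)+1" using True by presburger
    then obtain j where x: "x = 2*j+1" by blast
    have "x \<in> S \<Longrightarrow> j < n" using sub x by auto
    then show ?thesis unfolding x psi_odd_mem len by (auto simp: phi_def split: if_splits)
  next
    case False
    show ?thesis
    proof (cases "x = 0")
      case True
      then show ?thesis using sub psi_sub[of "phi n S"] by auto
    next
      case False2: False
      have "x = 2*(x div 2 - 1)+2" using False False2 by presburger
      then obtain j where x: "x = 2*j+2" by blast
      have "x \<in> S \<Longrightarrow> j < n \<and> 2*j+1 \<notin> S"
      proof -
        assume xs: "x \<in> S"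
        then have jn: "j < n" using sub x by auto
        then have "Suc j \<in> {1..n}" by auto
        with pair have "\<not> (2*Suc j - 1 \<in> S \<and> 2*Suc j \<in> S)" by blast
        moreover have "2*Suc j - 1 = 2*j+1" "2*Suc j = x" using x by auto
        ultimately show ?thesis using jn xs by auto
      qed
      then show ?thesis unfolding x psi_even_mem len by (auto simp: phi_def split: if_splits)
    qed
  qed
qed

lemma sigvec_odd:
  assumes "j < length M"
  shows "sig_vec (psi M) (2*j+1) = height M j + 1"
proof -
  have "odd_below (psi M) (2*j+1) = int (cnt Up M j)"
    unfolding odd_below_def card_odd_lt by simp
  moreover have "even_below (psi M) (2*j+1) = int (cnt Dn M j)"
    unfolding even_below_def card_even_lt by simp
  ultimately show ?thesis by (simp add: sig_vec_def height_cnt)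
qed

lemma sigvec_even:
  assumes "j < length M"
  shows "sig_vec (psi M) (2*j+2) = (case M!j of Up \<Rightarrow> height M j + 2 | Lvl \<Rightarrow> height M j + 1 | Dn \<Rightarrow> height M j)"
proof -
  have "odd_below (psi M) (2*j+2) = int (cnt Up M (Suc j))"
    unfolding odd_below_def card_odd_lt by simp
  moreover have "even_below (psi M) (2*j+2) = int (cnt Dn M j)"
  proof -
    have "(2*j+2-1) div 2 = j" by presburger
    then show ?thesis unfolding even_below_def card_even_lt by simp
  qed
  ultimately show ?thesis using assms
    by (cases "M!j") (simp_all add: sig_vec_def height_cnt cnt_Suc psi_even_mem)
qed

lemma prod_pairs: "(\<Prod>i\<in>{1..2*m}. f i) = (\<Prod>j<m. f (2*j+1) * f (2*j+2))"
  for f :: "nat \<Rightarrow> 'a::comm_monoid_mult"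
proof (induction m)
  case 0 then show ?case by simp
next
  case (Suc m)
  have "{1..2*Suc m} = {1..2*m} \<union> {2*m+1, 2*m+2}" by auto
  then have "(\<Prod>i\<in>{1..2*Suc m}. f i) = (\<Prod>i\<in>{1..2*m}. f i) * (f (2*m+1) * f (2*m+2))"
    by (simp add: prod.union_disjoint mult_ac)
  then show ?case using Suc.IH by simp
qed

lemma prod_smult: "finite A \<Longrightarrow> (\<Prod>k\<in>A. smult (c k) (p ^ e k)) = smult (\<Prod>k\<in>A. c k) (p ^ (\<Sum>k\<in>A. e k))"
  by (induction A rule: finite_induct) (simp_all add: power_add mult_smult_left mult_smult_right mult_ac)

fun sw :: "int \<Rightarrow> step \<Rightarrow> int" where
  "sw h Up = (h+1)*(h+2)" | "sw h Lvl = (h+1)^2" | "sw h Dn = (h+1)*h"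

lemma step_weight_smult: "step_weight h s = smult (sw h s) (tvar ^ (if s = Up then 1 else 0))"
  by (cases s) (simp_all add: smult_one)

lemma sum_up: "(\<Sum>j<k. if j < length M \<and> M!j = Up then 1 else 0) = cnt Up M k"
  by (induction k) (simp_all add: cnt_Suc)

lemma weight:
  assumes "is_motzkin n M"
  shows "sig_weight n (psi M) = rho M"
proof -
  have len: "length M = n" using assms by (simp add: is_motzkin_def)
  have h0: "cnt Up M n = cnt Dn M n" using assms height_cnt[of M n] by (simp add: is_motzkin_def)
  have fin: "finite (psi M)" by (rule finite_subset[OF psi_sub]) simp
  have "psi M = {x \<in> psi M. odd x} \<union> {x \<in> psi M. even x}" by auto
  moreover have "card ({x \<in> psi M. odd x} \<union> {x \<in> psi M. even x}) = card {x \<in> psi M. odd x} + card {x \<in> psi M. even x}"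
    by (rule card_Un_disjoint) (use fin in auto)
  ultimately have "card (psi M) = card {x \<in> psi M. odd x} + card {x \<in> psi M. even x}" by simp
  then have cS: "card (psi M) div 2 = cnt Up M n"
    using len h0 by (simp add: card_odd_all card_even_all)
  have p1: "(\<Prod>i\<in>{1..2*n}. sig_vec (psi M) i) = (\<Prod>k<n. sw (height M k) (M!k))"
    unfolding prod_pairs
  proof (rule prod.cong)
    fix k assume "k \<in> {..<n}"
    then have k: "k < length M" using len by simp
    show "sig_vec (psi M) (2*k+1) * sig_vec (psi M) (2*k+2) = sw (height M k) (M!k)"
      unfolding sigvec_odd[OF k] sigvec_even[OF k]
      by (cases "M!k") (simp_all add: algebra_simps power2_eq_square)
  qed simp
  have p2: "(\<Sum>k<n. (if M!k = Up then 1 else 0)) = cnt Up M n"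
    unfolding sum_up[symmetric] using len by (intro sum.cong) auto
  have "rho M = (\<Prod>k<n. smult (sw (height M k) (M!k)) (tvar ^ (if M!k = Up then 1 else 0)))"
    unfolding rho_def len step_weight_smult ..
  also have "\<dots> = smult (\<Prod>k<n. sw (height M k) (M!k)) (tvar ^ (\<Sum>k<n. (if M!k = Up then 1 else 0)))"
    by (rule prod_smult) simp
  finally show ?thesis unfolding sig_weight_def p1 p2 cS by simp
qed

theorem mainTheorem4:
  fixes n :: nat
  assumes "n \<ge> 1"
  shows "\<exists>\<phi>. bij_betw \<phi> {S. is_signature n S} {M. is_motzkin n M} \<and>
             (\<forall>S. is_signature n S \<longrightarrow> sig_weight n S = rho (\<phi> S))"
proof (intro exI conjI allI impI)
  have lenphi: "length (phi n S) = n" for S by (simp add: phi_def)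
  have mot: "is_signature n S \<Longrightarrow> is_motzkin n (phi n S)" for S
    using sig_iff[OF lenphi[of S]] psi_phi[of n S] by simp
  show "bij_betw (phi n) {S. is_signature n S} {M. is_motzkin n M}"
  proof (rule bij_betw_byWitness[where f' = psi])
    show "\<forall>a\<in>{S. is_signature n S}. psi (phi n a) = a" using psi_phi by blast
    show "\<forall>a'\<in>{M. is_motzkin n M}. phi n (psi a') = a'"
      using phi_psi by (metis is_motzkin_def mem_Collect_eq)
    show "phi n ` {S. is_signature n S} \<subseteq> {M. is_motzkin n M}" using mot by blast
    show "psi ` {M. is_motzkin n M} \<subseteq> {S. is_signature n S}"
      using sig_iff by (auto simp: is_motzkin_def)
  qed
  fix S assume S: "is_signature n S"
  have "sig_weight n S = sig_weight n (psi (phi n S))" using psi_phi[OF S] by simp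
  also have "\<dots> = rho (phi n S)" by (rule weight[OF mot[OF S]])
  finally show "sig_weight n S = rho (phi n S)" .
qed

end
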